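(* Let $T$ be a discrete valuation ring with uniformizer $t$ and valuation $v_t$, let $m\ge1$, and let $\xi=(\xi_0,\dots,\xi_{m-1})$ be a minimally ordered tuple of pairwise distinct elements of $T$. Then the matrix $L_\xi=(L_{i,j}(\xi))_{i,j\in[0,m-1]}$ has all entries in $T$, where $L_{i,j}(\xi)=\prod_{k\in[0,j-1]\setminus\{i\}}(\xi_j-\xi_k)\big/\prod_{k\in[0,j-1]\setminus\{i\}}(\xi_i-\xi_k)$ for $i<j$ and $L_{i,j}(\xi)=0$ for $i\ge j$. In particular, for $i\in[0,m-1]$ the $(i+1)$st $T$-linear elementary divisor of the Vandermonde matrix $V_\xi=(\xi_j^i)_{i,j\in[0,m-1]}$ has valuation $\sum_{j\in[0,i-1]}v_t(\xi_i-\xi_j)$.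
   Context: A tuple $(\xi_0,\dots,\xi_{m-1})$ of pairwise distinct elements of $T$ is minimally ordered if $\sum_{i\in[0,j-1]}v_t(\xi_j-\xi_i)\le\sum_{i\in[0,j-1]}v_t(\xi_k-\xi_i)$ for all $j\in[0,m-1]$ and $k\in[j+1,m-1]$. The elementary divisors of a matrix $A\in T^{m\times m}$ with nonzero determinant are $t^{e_0},\dots,t^{e_{m-1}}$, $e_0\le\dots\le e_{m-1}$, with $A=U\,\mathrm{diag}(t^{e_0},\dots,t^{e_{m-1}})\,W$ for invertible $U,W$ over $T$; the $(i+1)$st has valuation $e_i$. *)

theory Defs
  imports "HOL-Computational_Algebra.Polynomial_Factorial" "Jordan_Normal_Form.Matrix"
begin

text \<open>A discrete valuation ring is modelled by an integral domain type 'a (the ring T),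
  an element t (uniformizer) and a function v (the valuation v_t on nonzero elements):
  t is a nonzero nonunit and every nonzero x equals a unit times t ^ v x.
  (This forces T to be a DVR with uniformizer t, and v to be its normalized valuation.)\<close>
definition dvr_uniformizer_valuation :: "'a::idom \<Rightarrow> ('a \<Rightarrow> nat) \<Rightarrow> bool" where
  "dvr_uniformizer_valuation t v \<longleftrightarrow>
     t \<noteq> 0 \<and> \<not> t dvd 1 \<and>
     (\<forall>x. x \<noteq> 0 \<longrightarrow> (\<exists>u. u dvd 1 \<and> x = u * t ^ v x))"

definition minimally_ordered :: "('a::idom \<Rightarrow> nat) \<Rightarrow> nat \<Rightarrow> (nat \<Rightarrow> 'a) \<Rightarrow> bool" where
  "minimally_ordered v m \<xi> \<longleftrightarrow>
     inj_on \<xi> {..<m} \<and>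
     (\<forall>j<m. \<forall>k. j < k \<and> k < m \<longrightarrow>
        (\<Sum>i<j. v (\<xi> j - \<xi> i)) \<le> (\<Sum>i<j. v (\<xi> k - \<xi> i)))"

definition L_mat :: "nat \<Rightarrow> (nat \<Rightarrow> 'a::idom) \<Rightarrow> 'a fract mat" where
  "L_mat m \<xi> = mat m m (\<lambda>(i, j).
     if i < j then
       (\<Prod>k\<in>{..<j} - {i}. to_fract (\<xi> j - \<xi> k)) /
       (\<Prod>k\<in>{..<j} - {i}. to_fract (\<xi> i - \<xi> k))
     else 0)"

definition vandermonde :: "nat \<Rightarrow> (nat \<Rightarrow> 'a::comm_ring_1) \<Rightarrow> 'a mat" where
  "vandermonde m \<xi> = mat m m (\<lambda>(i, j). \<xi> j ^ i)"

definition diag_pow :: "nat \<Rightarrow> 'a::comm_ring_1 \<Rightarrow> (nat \<Rightarrow> nat) \<Rightarrow> 'a mat" where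
  "diag_pow m t e = mat m m (\<lambda>(i, j). if i = j then t ^ e i else 0)"

definition elementary_divisor_exponents :: "'a::comm_ring_1 \<Rightarrow> nat \<Rightarrow> 'a mat \<Rightarrow> (nat \<Rightarrow> nat) \<Rightarrow> bool" where
  "elementary_divisor_exponents t m A e \<longleftrightarrow>
     (\<forall>i j. i \<le> j \<and> j < m \<longrightarrow> e i \<le> e j) \<and>
     (\<exists>U W. U \<in> carrier_mat m m \<and> W \<in> carrier_mat m m \<and>
        invertible_mat U \<and> invertible_mat W \<and> A = U * diag_pow m t e * W)"

end

theory Submission
  imports Defs "Jordan_Normal_Form.Determinant"
begin

lemma inv_by_det:
  fixes A :: "'a::comm_ring_1 mat"
  assumes A: "A \<in> carrier_mat n n" and d: "det A dvd 1"
  shows "invertible_mat A"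
proof -
  obtain w where w: "1 = det A * w" using d by (auto elim: dvdE)
  define B where "B = w \<cdot>\<^sub>m adj_mat A"
  have B: "B \<in> carrier_mat n n" using adj_mat[OF A] unfolding B_def by simp
  have "A * B = w \<cdot>\<^sub>m (A * adj_mat A)" unfolding B_def using adj_mat[OF A] A by (simp add: mult_smult_distrib)
  also have "\<dots> = 1\<^sub>m n" using adj_mat[OF A] w by (auto intro!: eq_matI simp: mult.commute)
  finally have 1: "A * B = 1\<^sub>m n" .
  have "B * A = w \<cdot>\<^sub>m (adj_mat A * A)" unfolding B_def using adj_mat[OF A] A by (simp add: mult_smult_assoc_mat)
  also have "\<dots> = 1\<^sub>m n" using adj_mat[OF A] w by (auto intro!: eq_matI simp: mult.commute)
  finally have 2: "B * A = 1\<^sub>m n" .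
  show ?thesis unfolding invertible_mat_def inverts_mat_def using A B 1 2 by auto
qed

lemma inv_obtain:
  fixes A :: "'a::semiring_1 mat"
  assumes "invertible_mat A" "A \<in> carrier_mat n n"
  obtains B where "B \<in> carrier_mat n n" "A * B = 1\<^sub>m n" "B * A = 1\<^sub>m n"
proof -
  from assms obtain B where "A * B = 1\<^sub>m (dim_row A)" "B * A = 1\<^sub>m (dim_row B)"
    unfolding invertible_mat_def inverts_mat_def by auto
  moreover have "dim_row B = n" "dim_col B = n" using calculation assms
    by (metis carrier_matD index_mult_mat(2,3) index_one_mat(2,3))+
  ultimately show ?thesis using that assms by auto
qed

lemma prod_cong_one:
  fixes f :: "'b \<Rightarrow> 'a::comm_ring_1"
  assumes "finite S" "\<forall>i\<in>S. t dvd (f i - 1)"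
  shows "t dvd (prod f S - 1)"
  using assms
proof (induction S rule: finite_induct)
  case empty then show ?case by simp
next
  case (insert x F)
  have "prod f (insert x F) - 1 = (f x - 1) * prod f F + (prod f F - 1)"
    using insert by (simp add: algebra_simps)
  moreover have "t dvd (f x - 1) * prod f F + (prod f F - 1)"
    using insert by (intro dvd_add) auto
  ultimately show ?case by (simp only:)
qed

lemma det_cong_one:
  fixes A :: "'a::comm_ring_1 mat"
  assumes A: "A \<in> carrier_mat k k"
    and c: "\<forall>i<k. \<forall>j<k. t dvd (A $$ (i,j) - (if i = j then 1 else 0))"
  shows "t dvd (det A - 1)"
proof -
  let ?P = "{p. p permutes {0..<k}}"
  have fin: "finite ?P" by (simp add: finite_permutations)
  have s1: "(\<Sum>p\<in>?P. (if p = id then 1 else 0 :: 'a)) = 1"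
    using fin by (simp add: sum.delta' permutes_id)
  have "det A - 1 = (\<Sum>p\<in>?P. signof p * (\<Prod>i=0..<k. A $$ (i, p i)) - (if p = id then 1 else 0))"
    unfolding det_def'[OF A] sum_subtractf s1 by simp
  also have "t dvd \<dots>"
  proof (rule dvd_sum)
    fix p assume p: "p \<in> ?P"
    show "t dvd signof p * (\<Prod>i=0..<k. A $$ (i, p i)) - (if p = id then 1 else 0)"
    proof (cases "p = id")
      case True
      have "t dvd (\<Prod>i=0..<k. A $$ (i, p i)) - 1"
        by (rule prod_cong_one) (use c True in force)+
      then show ?thesis using True by (simp add: sign_id)
    next
      case False
      then obtain i where i: "p i \<noteq> i" by (meson eq_id_iff)
      have ik: "i \<in> {0..<k}" using p i unfolding permutes_def by auto
      have pik: "p i < k" using permutes_in_image[of p "{0..<k}" i] p ik by auto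
      have "t dvd A $$ (i, p i)" using c ik pik i by force
      also have "\<dots> dvd (\<Prod>i=0..<k. A $$ (i, p i))" by (rule dvd_prodI) (use ik in auto)
      finally show ?thesis using False by simp
    qed
  qed
  finally show ?thesis .
qed

lemma det_zero_row:
  fixes A :: "'a::comm_ring_1 mat"
  assumes A: "A \<in> carrier_mat k k" and r: "r < k" and z: "\<forall>j<k. A $$ (r,j) = 0"
  shows "det A = 0"
proof -
  have "(\<Prod>i=0..<k. A $$ (i, p i)) = 0" if p: "p permutes {0..<k}" for p
  proof -
    have "p r < k" using permutes_in_image[OF p] r by auto
    then show ?thesis using r z by (intro prod_zero) (auto intro!: bexI[of _ r])
  qed
  then show ?thesis unfolding det_def'[OF A] by simp
qed

definition Pinv :: "'a::comm_ring_1 \<Rightarrow> nat \<Rightarrow> 'a mat \<Rightarrow> nat \<Rightarrow> nat \<Rightarrow> bool" where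
  "Pinv t m A n k \<longleftrightarrow> (\<exists>Z S Z'. Z \<in> carrier_mat m k \<and> S \<in> carrier_mat k m \<and> Z' \<in> carrier_mat m k
      \<and> A * Z = t ^ n \<cdot>\<^sub>m Z' \<and> S * Z = 1\<^sub>m k)"

lemma Pinv_mult:
  fixes A :: "'a::comm_ring_1 mat"
  assumes A: "A \<in> carrier_mat m m" and X: "X \<in> carrier_mat m m" and Y: "Y \<in> carrier_mat m m"
    and Yi: "Yi \<in> carrier_mat m m" and YYi: "Y * Yi = 1\<^sub>m m" and P: "Pinv t m A n k"
  shows "Pinv t m (X * A * Y) n k"
proof -
  from P obtain Z S Z' where Z: "Z \<in> carrier_mat m k" and S: "S \<in> carrier_mat k m"
    and Z': "Z' \<in> carrier_mat m k" and AZ: "A * Z = t ^ n \<cdot>\<^sub>m Z'" and SZ: "S * Z = 1\<^sub>m k"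
    unfolding Pinv_def by blast
  have "Y * (Yi * Z) = Y * Yi * Z"
    by (rule assoc_mult_mat[symmetric, OF Y Yi Z])
  then have YYZ: "Y * (Yi * Z) = Z" using YYi Z by simp
  have XA: "X * A \<in> carrier_mat m m" using X A by simp
  have "X * A * Y * (Yi * Z) = X * A * (Y * (Yi * Z))"
    by (rule assoc_mult_mat[OF XA Y mult_carrier_mat[OF Yi Z]])
  also have "\<dots> = X * (A * Z)" using YYZ X A Z by (simp add: assoc_mult_mat)
  also have "\<dots> = t ^ n \<cdot>\<^sub>m (X * Z')" using AZ X Z' by (simp add: mult_smult_distrib)
  finally have 1: "X * A * Y * (Yi * Z) = t ^ n \<cdot>\<^sub>m (X * Z')" .
  have "S * Y * (Yi * Z) = S * (Y * (Yi * Z))" by (rule assoc_mult_mat[OF S Y mult_carrier_mat[OF Yi Z]])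
  then have 2: "S * Y * (Yi * Z) = 1\<^sub>m k" using YYZ SZ by simp
  show ?thesis unfolding Pinv_def
    by (rule exI[of _ "Yi * Z"], rule exI[of _ "S * Y"], rule exI[of _ "X * Z'"])
       (use 1 2 Yi Z S Y X Z' in auto)
qed

lemma diag_mult_entry:
  assumes Z: "Z \<in> carrier_mat m k" and i: "i < m" and l: "l < k"
  shows "(diag_pow m t e * Z) $$ (i, l) = t ^ e i * Z $$ (i, l)"
proof -
  have "(diag_pow m t e * Z) $$ (i, l) = (\<Sum>c\<in>{0..<m}. (if i = c then t ^ e i else 0) * Z $$ (c, l))"
    using Z i l by (simp add: diag_pow_def scalar_prod_def)
  also have "\<dots> = (\<Sum>c\<in>{0..<m}. if i = c then t ^ e i * Z $$ (c, l) else 0)"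
    by (rule sum.cong) auto
  also have "\<dots> = t ^ e i * Z $$ (i, l)" using i by simp
  finally show ?thesis .
qed

lemma diag_pow_carrier[simp]: "diag_pow m t e \<in> carrier_mat m m"
  "dim_row (diag_pow m t e) = m" "dim_col (diag_pow m t e) = m"
  by (simp_all add: diag_pow_def)

lemma Pinv_diag_ge:
  fixes t :: "'a::comm_ring_1"
  assumes k: "k \<le> card {i. i < m \<and> n \<le> e i}"
  shows "Pinv t m (diag_pow m t e) n k"
proof -
  define J where "J = {i. i < m \<and> n \<le> e i}"
  have fJ: "finite J" unfolding J_def by simp
  obtain h where h: "bij_betw h {0..<card J} J" using ex_bij_betw_nat_finite[OF fJ] by blast
  have hJ: "l < k \<Longrightarrow> h l \<in> J" for l using h k unfolding J_def bij_betw_def by auto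
  have hm: "l < k \<Longrightarrow> h l < m" for l using hJ unfolding J_def by auto
  have he: "l < k \<Longrightarrow> n \<le> e (h l)" for l using hJ unfolding J_def by auto
  have hinj: "a < k \<Longrightarrow> b < k \<Longrightarrow> h a = h b \<Longrightarrow> a = b" for a b
    using h k unfolding J_def bij_betw_def inj_on_def by auto
  define Z where "Z = mat m k (\<lambda>(i,l). if i = h l then (1::'a) else 0)"
  define S where "S = mat k m (\<lambda>(l,i). if i = h l then (1::'a) else 0)"
  define Z' where "Z' = mat m k (\<lambda>(i,l). if i = h l then t ^ (e i - n) else 0)"
  have Zc: "Z \<in> carrier_mat m k" and Sc: "S \<in> carrier_mat k m" and Z'c: "Z' \<in> carrier_mat m k"
    unfolding Z_def S_def Z'_def by auto
  have 1: "diag_pow m t e * Z = t ^ n \<cdot>\<^sub>m Z'"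
  proof (rule eq_matI)
    fix i l assume i: "i < dim_row (t ^ n \<cdot>\<^sub>m Z')" and l: "l < dim_col (t ^ n \<cdot>\<^sub>m Z')"
    then have i: "i < m" and l: "l < k" using Z'c by auto
    have "(diag_pow m t e * Z) $$ (i, l) = t ^ e i * Z $$ (i, l)" by (rule diag_mult_entry[OF Zc i l])
    also have "\<dots> = t ^ n * Z' $$ (i, l)"
    proof (cases "i = h l")
      case True
      then have "n \<le> e i" using he l by auto
      then have "t ^ e i = t ^ n * t ^ (e i - n)" by (simp flip: power_add)
      then show ?thesis using True i l unfolding Z_def Z'_def by simp
    qed (use i l in \<open>simp add: Z_def Z'_def\<close>)
    finally show "(diag_pow m t e * Z) $$ (i, l) = (t ^ n \<cdot>\<^sub>m Z') $$ (i, l)" using i l Z'c by simp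
  qed (use Zc Z'c in auto)
  have 2: "S * Z = 1\<^sub>m k"
  proof (rule eq_matI)
    fix a b assume a: "a < dim_row (1\<^sub>m k :: 'a mat)" and b: "b < dim_col (1\<^sub>m k :: 'a mat)"
    then have a: "a < k" and b: "b < k" by auto
    have "(S * Z) $$ (a, b) = (\<Sum>i\<in>{0..<m}. (if i = h a then 1 else 0) * (if i = h b then 1 else 0))"
      using a b Sc Zc by (simp add: S_def Z_def scalar_prod_def)
    also have "\<dots> = (\<Sum>i\<in>{0..<m}. if i = h a then (if h a = h b then 1 else 0) else 0)"
      by (rule sum.cong) auto
    also have "\<dots> = (if a = b then 1 else 0)" using hm[OF a] hinj[OF a b] by auto
    finally show "(S * Z) $$ (a, b) = 1\<^sub>m k $$ (a, b)" using a b by simp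
  qed (use Sc Zc in auto)
  show ?thesis unfolding Pinv_def using Zc Sc Z'c 1 2 by blast
qed

lemma Pinv_diag_le:
  fixes t :: "'a::idom"
  assumes t0: "t \<noteq> 0" and tu: "\<not> t dvd 1" and P: "Pinv t m (diag_pow m t e) n k"
  shows "k \<le> card {i. i < m \<and> n \<le> e i}"
proof (rule ccontr)
  define J where "J = {i. i < m \<and> n \<le> e i}"
  define c where "c = card J"
  assume "\<not> k \<le> card {i. i < m \<and> n \<le> e i}"
  then have ck: "c < k" unfolding c_def J_def by simp
  have fJ: "finite J" unfolding J_def by simp
  obtain h where h: "bij_betw h {0..<c} J" using ex_bij_betw_nat_finite[OF fJ] c_def by blast
  have hJ: "l < c \<Longrightarrow> h l \<in> J" for l using h unfolding bij_betw_def by auto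
  from P obtain Z S Z' where Z: "Z \<in> carrier_mat m k" and S: "S \<in> carrier_mat k m"
    and Z': "Z' \<in> carrier_mat m k" and AZ: "diag_pow m t e * Z = t ^ n \<cdot>\<^sub>m Z'" and SZ: "S * Z = 1\<^sub>m k"
    unfolding Pinv_def by blast
  have tZ: "t dvd Z $$ (i, b)" if i: "i < m" "i \<notin> J" and b: "b < k" for i b
  proof -
    have en: "e i < n" using i unfolding J_def by auto
    have "t ^ e i * Z $$ (i, b) = (diag_pow m t e * Z) $$ (i, b)"
      using diag_mult_entry[OF Z i(1) b, of t e] by simp
    also have "\<dots> = t ^ n * Z' $$ (i, b)" unfolding AZ using i b Z' by simp
    also have "\<dots> = t ^ e i * (t ^ (n - e i) * Z' $$ (i, b))" using en
      by (simp add: mult.assoc flip: power_add)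
    finally have "Z $$ (i, b) = t ^ (n - e i) * Z' $$ (i, b)" using t0 by simp
    moreover have "t dvd t ^ (n - e i)" using en by (simp add: dvd_power)
    ultimately show ?thesis by simp
  qed
  define A1 where "A1 = mat k k (\<lambda>(a,l). if l < c then S $$ (a, h l) else 0)"
  define B1 where "B1 = mat k k (\<lambda>(l,b). if l < c then Z $$ (h l, b) else 0)"
  have A1c: "A1 \<in> carrier_mat k k" and B1c: "B1 \<in> carrier_mat k k" unfolding A1_def B1_def by auto
  have dB: "det B1 = 0" by (rule det_zero_row[OF B1c ck]) (simp add: B1_def ck)
  have dM: "det (A1 * B1) = 0" using det_mult[OF A1c B1c] dB by simp
  have Ment: "(A1 * B1) $$ (a, b) = (\<Sum>i\<in>J. S $$ (a, i) * Z $$ (i, b))" if a: "a < k" and b: "b < k" for a b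
  proof -
    have "(A1 * B1) $$ (a, b) = (\<Sum>l\<in>{0..<k}. (if l < c then S $$ (a, h l) else 0) * (if l < c then Z $$ (h l, b) else 0))"
      using a b A1c B1c by (simp add: A1_def B1_def scalar_prod_def)
    also have "\<dots> = (\<Sum>l\<in>{0..<c}. S $$ (a, h l) * Z $$ (h l, b))"
      by (rule sum.mono_neutral_cong_right) (use ck in auto)
    also have "\<dots> = (\<Sum>i\<in>J. S $$ (a, i) * Z $$ (i, b))"
      by (rule sum.reindex_bij_betw[OF h])
    finally show ?thesis .
  qed
  have Jsub: "J \<subseteq> {0..<m}" unfolding J_def by auto
  have cong: "\<forall>a<k. \<forall>b<k. t dvd ((A1 * B1) $$ (a, b) - (if a = b then 1 else 0))"
  proof (intro allI impI)
    fix a b assume a: "a < k" and b: "b < k"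
    have "(if a = b then 1 else 0) = (S * Z) $$ (a, b)" using SZ a b by simp
    also have "\<dots> = (\<Sum>i\<in>{0..<m}. S $$ (a, i) * Z $$ (i, b))"
      using a b S Z by (simp add: scalar_prod_def)
    also have "\<dots> = (\<Sum>i\<in>J. S $$ (a, i) * Z $$ (i, b)) + (\<Sum>i\<in>{0..<m} - J. S $$ (a, i) * Z $$ (i, b))"
      using sum.subset_diff[OF Jsub, of "\<lambda>i. S $$ (a, i) * Z $$ (i, b)"] by (simp add: add.commute)
    finally have "(A1 * B1) $$ (a, b) - (if a = b then 1 else 0) = - (\<Sum>i\<in>{0..<m} - J. S $$ (a, i) * Z $$ (i, b))"
      using Ment[OF a b] by simp
    moreover have "t dvd (\<Sum>i\<in>{0..<m} - J. S $$ (a, i) * Z $$ (i, b))"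
      by (rule dvd_sum) (use tZ b in auto)
    ultimately show "t dvd ((A1 * B1) $$ (a, b) - (if a = b then 1 else 0))" by simp
  qed
  have "t dvd (det (A1 * B1) - 1)"
    by (rule det_cong_one[OF _ cong]) (use A1c B1c in auto)
  then show False using dM tu by simp
qed

lemma unit_prod:
  fixes f :: "'b \<Rightarrow> 'a::comm_semiring_1"
  assumes "finite S" "\<forall>k\<in>S. f k dvd 1" shows "prod f S dvd 1"
  using assms by (induction S rule: finite_induct) auto

lemma to_fract_prod: "finite S \<Longrightarrow> to_fract (prod f S) = (\<Prod>k\<in>S. to_fract (f k))"
  by (induction S rule: finite_induct) auto

lemma dvr_prod:
  fixes t :: "'a::idom"
  assumes dvr: "dvr_uniformizer_valuation t v" and fin: "finite S" and nz: "\<forall>k\<in>S. f k \<noteq> 0"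
  shows "\<exists>u. u dvd 1 \<and> prod f S = u * t ^ (\<Sum>k\<in>S. v (f k))"
  using fin nz
proof (induction S rule: finite_induct)
  case empty then show ?case by auto
next
  case (insert x F)
  then obtain u where u: "u dvd 1" "prod f F = u * t ^ (\<Sum>k\<in>F. v (f k))" by auto
  obtain w where w: "w dvd 1" "f x = w * t ^ v (f x)" using dvr insert.prems
    unfolding dvr_uniformizer_valuation_def by auto
  have "prod f (insert x F) = (w * u) * t ^ (\<Sum>k\<in>insert x F. v (f k))"
    using insert u w by (simp add: power_add algebra_simps)
  moreover have "w * u dvd 1" using u w by simp
  ultimately show ?case by blast
qed

lemma dvr_dvd:
  fixes t :: "'a::idom"
  assumes "a = u1 * t ^ A" "b = u2 * t ^ B" "u2 dvd 1" "B \<le> A"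
  shows "b dvd a"
proof -
  have "b dvd t ^ B" using assms(2,3) by (metis dvd_mult_unit_iff' dvd_refl)
  also have "t ^ B dvd t ^ A" using assms(4) by (rule le_imp_power_dvd)
  also have "\<dots> dvd a" using assms(1) by simp
  finally show ?thesis .
qed

lemma lagrange:
  fixes x :: "nat \<Rightarrow> 'b::field" and p :: "'b poly"
  assumes inj: "inj_on x {..<j}" and j: "0 < j" and deg: "degree p < j"
  shows "poly p y = (\<Sum>k<j. poly p (x k) * ((\<Prod>l\<in>{..<j}-{k}. (y - x l)) / (\<Prod>l\<in>{..<j}-{k}. (x k - x l))))"
proof -
  define c where "c k = poly p (x k) / (\<Prod>l\<in>{..<j}-{k}. (x k - x l))" for k
  define b where "b k = (\<Prod>l\<in>{..<j}-{k}. [:- x l, 1:])" for k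
  define q where "q = p - (\<Sum>k<j. Polynomial.smult (c k) (b k))"
  have polyq: "poly q z = poly p z - (\<Sum>k<j. c k * (\<Prod>l\<in>{..<j}-{k}. (z - x l)))" for z
    unfolding q_def b_def by (simp add: poly_sum poly_prod)
  have degb: "degree (b k) \<le> j - 1" if "k < j" for k
  proof -
    have "degree (b k) \<le> (\<Sum>l\<in>{..<j}-{k}. degree [:- x l, 1:])"
      unfolding b_def using degree_prod_sum_le[of "{..<j}-{k}" "\<lambda>l. [:- x l, 1:]"] by (simp add: o_def)
    also have "\<dots> = card ({..<j}-{k})" by simp
    also have "\<dots> = j - 1" using that by simp
    finally show ?thesis .
  qed
  have degq: "degree q < j"
  proof -
    have "degree (\<Sum>k<j. Polynomial.smult (c k) (b k)) \<le> j - 1"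
      by (rule degree_sum_le) (use degb degree_smult_le order_trans in auto)
    moreover have "degree q \<le> max (degree p) (degree (\<Sum>k<j. Polynomial.smult (c k) (b k)))"
      unfolding q_def by (rule degree_diff_le_max)
    ultimately show ?thesis using deg j by linarith
  qed
  have root: "poly q (x i) = 0" if i: "i < j" for i
  proof -
    have nz: "(\<Prod>l\<in>{..<j}-{i}. (x i - x l)) \<noteq> 0"
      using inj i by (auto simp: inj_on_def)
    have "(\<Sum>k<j. c k * (\<Prod>l\<in>{..<j}-{k}. (x i - x l))) =
          (\<Sum>k<j. if k = i then poly p (x i) else 0)"
    proof (rule sum.cong)
      fix k assume k: "k \<in> {..<j}"
      show "c k * (\<Prod>l\<in>{..<j}-{k}. (x i - x l)) = (if k = i then poly p (x i) else 0)"
      proof (cases "k = i")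
        case True then show ?thesis using nz by (simp add: c_def)
      next
        case False
        then have "(\<Prod>l\<in>{..<j}-{k}. (x i - x l)) = 0" using i
          by (intro prod_zero) (auto intro!: bexI[of _ i])
        then show ?thesis using False by simp
      qed
    qed simp
    also have "\<dots> = poly p (x i)" using i by simp
    finally show ?thesis unfolding polyq by simp
  qed
  have q0: "q = 0"
  proof (rule ccontr)
    assume "q \<noteq> 0"
    then have "card {z. poly q z = 0} \<le> degree q" by (rule card_poly_roots_bound)
    moreover have "x ` {..<j} \<subseteq> {z. poly q z = 0}" using root by auto
    moreover have "finite {z. poly q z = 0}" using \<open>q \<noteq> 0\<close> by (rule poly_roots_finite)
    ultimately have "card (x ` {..<j}) \<le> degree q" by (meson card_mono order_trans)
    then show False using card_image[OF inj] degq by simp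
  qed
  have "poly p y = (\<Sum>k<j. c k * (\<Prod>l\<in>{..<j}-{k}. (y - x l)))" using polyq[of y] q0 by simp
  also have "\<dots> = (\<Sum>k<j. poly p (x k) * ((\<Prod>l\<in>{..<j}-{k}. (y - x l)) / (\<Prod>l\<in>{..<j}-{k}. (x k - x l))))"
    unfolding c_def by (rule sum.cong) auto
  finally show ?thesis .
qed

lemma prod_list_map_upt: "prod_list (map f [0..<m]) = prod f {0..<(m::nat)}"
  by (induction m) (auto simp: mult.commute)

lemma rt_add: assumes "a \<in> range to_fract" "b \<in> range to_fract" shows "a + b \<in> range to_fract"
proof -
  obtain x y where "a = to_fract x" "b = to_fract y" using assms by auto
  then have "a + b = to_fract (x + y)" by simp
  then show ?thesis by blast
qed

lemma rt_diff: assumes "a \<in> range to_fract" "b \<in> range to_fract" shows "a - b \<in> range to_fract"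
proof -
  obtain x y where "a = to_fract x" "b = to_fract y" using assms by auto
  then have "a - b = to_fract (x - y)" by simp
  then show ?thesis by blast
qed

lemma rt_mult: assumes "a \<in> range to_fract" "b \<in> range to_fract" shows "a * b \<in> range to_fract"
proof -
  obtain x y where "a = to_fract x" "b = to_fract y" using assms by auto
  then have "a * b = to_fract (x * y)" by simp
  then show ?thesis by blast
qed

lemma rt_zero: "0 \<in> range to_fract"
  by (metis to_fract_0 rangeI)

lemmas rt_closed = rt_add rt_diff rt_mult rt_zero

lemma rt_sum:
  assumes "finite S" "\<forall>k\<in>S. f k \<in> range (to_fract :: 'a::idom \<Rightarrow> 'a fract)"
  shows "sum f S \<in> range (to_fract :: 'a \<Rightarrow> 'a fract)"
  using assms by (induction S rule: finite_induct) (auto intro: rt_closed)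

context
  fixes t :: "'a::idom" and v :: "'a \<Rightarrow> nat" and m :: nat and \<xi> :: "nat \<Rightarrow> 'a"
  assumes dvr: "dvr_uniformizer_valuation t v" and mo: "minimally_ordered v m \<xi>"
begin

lemma inj: "inj_on \<xi> {..<m}" using mo unfolding minimally_ordered_def by auto

lemma nz: "a < m \<Longrightarrow> b < m \<Longrightarrow> a \<noteq> b \<Longrightarrow> \<xi> a - \<xi> b \<noteq> 0"
  using inj by (auto simp: inj_on_def)

lemma NT_diag: "a < m \<Longrightarrow> \<exists>u. u dvd 1 \<and> (\<Prod>k\<in>{..<a}. \<xi> a - \<xi> k) = u * t ^ (\<Sum>j<a. v (\<xi> a - \<xi> j))"
proof (rule dvr_prod[OF dvr])
  assume a: "a < m"
  show "\<forall>k\<in>{..<a}. \<xi> a - \<xi> k \<noteq> 0"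
  proof
    fix k assume "k \<in> {..<a}"
    then show "\<xi> a - \<xi> k \<noteq> 0" using nz[of a k] a by auto
  qed
qed simp

lemma mo_le: assumes "a < b" "b < m"
  shows "(\<Sum>j<a. v (\<xi> a - \<xi> j)) \<le> (\<Sum>j<a. v (\<xi> b - \<xi> j))"
proof -
  have am: "a < m" using assms by simp
  have "\<forall>j<m. \<forall>k. j < k \<and> k < m \<longrightarrow> (\<Sum>i<j. v (\<xi> j - \<xi> i)) \<le> (\<Sum>i<j. v (\<xi> k - \<xi> i))"
    using mo unfolding minimally_ordered_def by (elim conjE)
  then show ?thesis using am assms by blast
qed

lemma NT_nz: assumes "a \<le> b" "b < m" shows "\<forall>k\<in>{..<a}. \<xi> b - \<xi> k \<noteq> 0"
proof
  fix k assume "k \<in> {..<a}"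
  then show "\<xi> b - \<xi> k \<noteq> 0" using nz[of b k] assms by auto
qed

lemma NT_form: assumes "a \<le> b" "b < m"
  shows "\<exists>u. u dvd 1 \<and> (\<Prod>k\<in>{..<a}. \<xi> b - \<xi> k) = u * t ^ (\<Sum>j<a. v (\<xi> b - \<xi> j))"
  by (rule dvr_prod[OF dvr finite_lessThan NT_nz[OF assms]])

lemma NT_dvd: assumes "a \<le> b" "b < m"
  shows "(\<Prod>k\<in>{..<a}. \<xi> a - \<xi> k) dvd (\<Prod>k\<in>{..<a}. \<xi> b - \<xi> k)"
proof (cases "a = b")
  case False
  then have ab: "a < b" using assms by simp
  obtain u where u: "u dvd 1" "(\<Prod>k\<in>{..<a}. \<xi> a - \<xi> k) = u * t ^ (\<Sum>j<a. v (\<xi> a - \<xi> j))"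
    using NT_form[of a a] assms by auto
  obtain u' where u': "u' dvd 1" "(\<Prod>k\<in>{..<a}. \<xi> b - \<xi> k) = u' * t ^ (\<Sum>j<a. v (\<xi> b - \<xi> j))"
    using NT_form[OF assms] by auto
  show ?thesis by (rule dvr_dvd[OF u'(2) u(2) u(1) mo_le[OF ab assms(2)]])
next
  case True then show ?thesis by simp
qed

lemma tpow_dvd: assumes "a < m" "b < m"
  shows "t ^ (\<Sum>j<a. v (\<xi> a - \<xi> j)) dvd (\<Prod>k\<in>{..<a}. \<xi> b - \<xi> k)"
proof (cases "a \<le> b")
  case True
  obtain u where u: "u dvd 1" "(\<Prod>k\<in>{..<a}. \<xi> a - \<xi> k) = u * t ^ (\<Sum>j<a. v (\<xi> a - \<xi> j))"
    using NT_form[of a a] assms by auto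
  have "t ^ (\<Sum>j<a. v (\<xi> a - \<xi> j)) dvd (\<Prod>k\<in>{..<a}. \<xi> a - \<xi> k)" using u by simp
  also have "\<dots> dvd (\<Prod>k\<in>{..<a}. \<xi> b - \<xi> k)" using NT_dvd True assms by simp
  finally show ?thesis .
next
  case False
  then have "(\<Prod>k\<in>{..<a}. \<xi> b - \<xi> k) = 0" by (intro prod_zero) (auto intro!: bexI[of _ b])
  then show ?thesis by (metis dvd_0_right)
qed

lemma d_mono: assumes "i \<le> j" "j < m"
  shows "(\<Sum>k<i. v (\<xi> i - \<xi> k)) \<le> (\<Sum>k<j. v (\<xi> j - \<xi> k))"
proof (cases "i = j")
  case False
  then have ij: "i < j" using assms by simp
  have "(\<Sum>k<i. v (\<xi> i - \<xi> k)) \<le> (\<Sum>k<i. v (\<xi> j - \<xi> k))"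
    by (rule mo_le[OF ij assms(2)])
  also have "\<dots> \<le> (\<Sum>k<j. v (\<xi> j - \<xi> k))" using ij by (intro sum_mono2) auto
  finally show ?thesis .
qed simp

end

context
  fixes t :: "'a::idom" and v :: "'a \<Rightarrow> nat" and m :: nat and \<xi> :: "nat \<Rightarrow> 'a"
  assumes dvr: "dvr_uniformizer_valuation t v" and mo: "minimally_ordered v m \<xi>"
begin

lemma NTi_nz: "i < m \<Longrightarrow> (\<Prod>k\<in>{..<i}. \<xi> i - \<xi> k) \<noteq> 0"
  using NT_nz[OF dvr mo, of i i] by simp

lemma Wf_int:
  assumes i: "i < m" and b: "b < m"
  shows "to_fract (\<Prod>k\<in>{..<i}. \<xi> b - \<xi> k) / to_fract (\<Prod>k\<in>{..<i}. \<xi> i - \<xi> k) \<in> range to_fract"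
proof (cases "i \<le> b")
  case True
  obtain q where q: "(\<Prod>k\<in>{..<i}. \<xi> b - \<xi> k) = (\<Prod>k\<in>{..<i}. \<xi> i - \<xi> k) * q"
    using NT_dvd[OF dvr mo True b] by (elim dvdE)
  have "to_fract (\<Prod>k\<in>{..<i}. \<xi> b - \<xi> k) / to_fract (\<Prod>k\<in>{..<i}. \<xi> i - \<xi> k) = to_fract q"
    unfolding q using NTi_nz[OF i] by simp
  then show ?thesis by simp
next
  case False
  then have "(\<Prod>k\<in>{..<i}. \<xi> b - \<xi> k) = 0" by (intro prod_zero) (auto intro!: bexI[of _ b])
  then show ?thesis by (metis rt_zero to_fract_0 div_0)
qed

lemma lag_id:
  assumes ij: "i < j" and j: "j < m"
  shows "(\<Sum>k<j. to_fract (\<Prod>l\<in>{..<i}. \<xi> k - \<xi> l) *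
      ((\<Prod>l\<in>{..<j}-{k}. to_fract (\<xi> j - \<xi> l)) / (\<Prod>l\<in>{..<j}-{k}. to_fract (\<xi> k - \<xi> l))))
    = to_fract (\<Prod>l\<in>{..<i}. \<xi> j - \<xi> l)"
proof -
  define x where "x k = to_fract (\<xi> k)" for k
  define p where "p = (\<Prod>l\<in>{..<i}. [:- x l, 1:])"
  have injx: "inj_on x {..<j}"
    using inj[OF dvr mo] j unfolding x_def inj_on_def by auto
  have degp: "degree p < j"
  proof -
    have "degree p = (\<Sum>l\<in>{..<i}. degree [:- x l, 1:])" unfolding p_def
      by (rule degree_prod_eq_sum_degree) auto
    then show ?thesis using ij by simp
  qed
  have polyp: "poly p z = (\<Prod>l\<in>{..<i}. z - x l)" for z
    unfolding p_def by (simp add: poly_prod)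
  have tf: "to_fract (\<Prod>l\<in>{..<i}. \<xi> b - \<xi> l) = poly p (x b)" for b
    unfolding polyp x_def by (simp add: to_fract_prod)
  have "poly p (x j) = (\<Sum>k<j. poly p (x k) * ((\<Prod>l\<in>{..<j}-{k}. (x j - x l)) / (\<Prod>l\<in>{..<j}-{k}. (x k - x l))))"
    by (rule lagrange[OF injx _ degp]) (use ij in simp)
  then show ?thesis unfolding tf by (simp add: x_def)
qed

lemma L_int:
  assumes j: "j < m"
  shows "i < j \<Longrightarrow> (\<Prod>l\<in>{..<j}-{i}. to_fract (\<xi> j - \<xi> l)) / (\<Prod>l\<in>{..<j}-{i}. to_fract (\<xi> i - \<xi> l)) \<in> range to_fract"
proof (induction "j - i" arbitrary: i rule: less_induct)
  case less
  define Lq where "Lq k = (\<Prod>l\<in>{..<j}-{k}. to_fract (\<xi> j - \<xi> l)) / (\<Prod>l\<in>{..<j}-{k}. to_fract (\<xi> k - \<xi> l))" for k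
  define N where "N k = to_fract (\<Prod>l\<in>{..<i}. \<xi> k - \<xi> l)" for k
  have i: "i < m" using less j by simp
  have D: "N i \<noteq> 0" unfolding N_def using NTi_nz[OF i] by simp
  have "(\<Sum>k<j. N k * Lq k) = N j" unfolding N_def Lq_def by (rule lag_id[OF less(2) j])
  moreover have "(\<Sum>k<j. N k * Lq k) = N i * Lq i + (\<Sum>k\<in>{..<j}-{i}. N k * Lq k)"
    using less(2) by (simp add: sum.remove)
  ultimately have "N i * Lq i = N j - (\<Sum>k\<in>{..<j}-{i}. N k * Lq k)" by (simp add: algebra_simps)
  then have "Lq i = (N j - (\<Sum>k\<in>{..<j}-{i}. N k * Lq k)) / N i" using D by (simp add: field_simps)
  also have "\<dots> = N j / N i - (\<Sum>k\<in>{..<j}-{i}. (N k / N i) * Lq k)"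
    by (simp add: diff_divide_distrib sum_divide_distrib)
  finally have eq: "Lq i = N j / N i - (\<Sum>k\<in>{..<j}-{i}. (N k / N i) * Lq k)" .
  have "(\<Sum>k\<in>{..<j}-{i}. (N k / N i) * Lq k) \<in> range to_fract"
  proof (rule rt_sum)
    show "\<forall>k\<in>{..<j} - {i}. N k / N i * Lq k \<in> range to_fract"
    proof
      fix k assume k: "k \<in> {..<j} - {i}"
      show "N k / N i * Lq k \<in> range to_fract"
      proof (cases "k < i")
        case True
        then have "(\<Prod>l\<in>{..<i}. \<xi> k - \<xi> l) = 0" by (intro prod_zero) (auto intro!: bexI[of _ k])
        then have "N k = 0" unfolding N_def by simp
        then show ?thesis using rt_zero by simp
      next
        case False
        then have ik: "i < k" "k < j" using k by auto
        have "Lq k \<in> range to_fract" unfolding Lq_def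
          by (rule less(1)) (use ik in auto)
        moreover have "N k / N i \<in> range to_fract" unfolding N_def
          by (rule Wf_int[OF i]) (use ik j in simp)
        ultimately show ?thesis by (intro rt_mult)
      qed
    qed
  qed simp
  moreover have "N j / N i \<in> range to_fract" unfolding N_def by (rule Wf_int[OF i j])
  ultimately have "Lq i \<in> range to_fract" unfolding eq by (intro rt_diff)
  then show ?case unfolding Lq_def .
qed

lemma L_mat_int: assumes "i < m" "j < m" shows "L_mat m \<xi> $$ (i, j) \<in> range to_fract"
proof (cases "i < j")
  case True
  then show ?thesis using assms L_int[OF assms(2) True] by (simp add: L_mat_def)
next
  case False
  then show ?thesis using assms rt_zero by (simp add: L_mat_def)
qed

end

lemma Pinv_transfer:
  fixes A :: "'a::comm_ring_1 mat"
  assumes U: "U \<in> carrier_mat m m" and W: "W \<in> carrier_mat m m" and D: "D \<in> carrier_mat m m"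
    and iU: "invertible_mat U" and iW: "invertible_mat W" and A: "A = U * D * W"
  shows "Pinv t m D n k \<longleftrightarrow> Pinv t m A n k"
proof -
  obtain Ui where Ui: "Ui \<in> carrier_mat m m" "U * Ui = 1\<^sub>m m" "Ui * U = 1\<^sub>m m" using inv_obtain[OF iU U] by blast
  obtain Wi where Wi: "Wi \<in> carrier_mat m m" "W * Wi = 1\<^sub>m m" "Wi * W = 1\<^sub>m m" using inv_obtain[OF iW W] by blast
  have Ac: "A \<in> carrier_mat m m" using A U W D by simp
  have UD: "U * D \<in> carrier_mat m m" using U D by simp
  have "A * Wi = U * D * (W * Wi)" unfolding A by (rule assoc_mult_mat[OF UD W Wi(1)])
  also have "\<dots> = U * D" using Wi(2) right_mult_one_mat[OF UD] by simp
  finally have AW: "A * Wi = U * D" .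
  have "Ui * A * Wi = Ui * (A * Wi)" by (rule assoc_mult_mat[OF Ui(1) Ac Wi(1)])
  also have "\<dots> = Ui * U * D" unfolding AW by (rule assoc_mult_mat[symmetric, OF Ui(1) U D])
  also have "\<dots> = D" using Ui(3) left_mult_one_mat[OF D] by simp
  finally have DA: "Ui * A * Wi = D" .
  show ?thesis
  proof
    assume "Pinv t m D n k"
    from Pinv_mult[OF D U W Wi(1) Wi(2) this] show "Pinv t m A n k" using A by simp
  next
    assume "Pinv t m A n k"
    from Pinv_mult[OF Ac Ui(1) Wi(1) W Wi(3) this] show "Pinv t m D n k" using DA by simp
  qed
qed

lemma mono_card:
  assumes mono: "\<forall>i j. i \<le> j \<and> j < m \<longrightarrow> e i \<le> (e j :: nat)" and i: "i < m"
  shows "n \<le> e i \<longleftrightarrow> m - i \<le> card {j. j < m \<and> n \<le> e j}"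
proof
  assume "n \<le> e i"
  then have "{i..<m} \<subseteq> {j. j < m \<and> n \<le> e j}" using mono by (auto intro: order_trans[of n "e i"])
  then have "card {i..<m} \<le> card {j. j < m \<and> n \<le> e j}" by (intro card_mono) auto
  then show "m - i \<le> card {j. j < m \<and> n \<le> e j}" by simp
next
  assume c: "m - i \<le> card {j. j < m \<and> n \<le> e j}"
  show "n \<le> e i"
  proof (rule ccontr)
    assume "\<not> n \<le> e i"
    have "{j. j < m \<and> n \<le> e j} \<subseteq> {Suc i..<m}"
    proof
      fix j assume j: "j \<in> {j. j < m \<and> n \<le> e j}"
      have "Suc i \<le> j"
      proof (rule ccontr)
        assume "\<not> Suc i \<le> j"
        then have "j \<le> i" by simp
        then have "e j \<le> e i" using mono i by blast
        then show False using j \<open>\<not> n \<le> e i\<close> by simp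
      qed
      then show "j \<in> {Suc i..<m}" using j by simp
    qed
    then have "card {j. j < m \<and> n \<le> e j} \<le> card {Suc i..<m}" by (intro card_mono) auto
    then show False using c i by simp
  qed
qed

lemma edx_unique:
  fixes t :: "'a::idom"
  assumes t0: "t \<noteq> 0" and tu: "\<not> t dvd 1"
    and E1: "elementary_divisor_exponents t m A e" and E2: "elementary_divisor_exponents t m A d"
    and i: "i < m"
  shows "e i = d i"
proof -
  obtain U1 W1 where U1: "U1 \<in> carrier_mat m m" and W1: "W1 \<in> carrier_mat m m" and iU1: "invertible_mat U1"
    and iW1: "invertible_mat W1" and A1: "A = U1 * diag_pow m t e * W1" and m1: "\<forall>i j. i \<le> j \<and> j < m \<longrightarrow> e i \<le> e j"
    using E1 unfolding elementary_divisor_exponents_def by blast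
  obtain U2 W2 where U2: "U2 \<in> carrier_mat m m" and W2: "W2 \<in> carrier_mat m m" and iU2: "invertible_mat U2"
    and iW2: "invertible_mat W2" and A2: "A = U2 * diag_pow m t d * W2" and m2: "\<forall>i j. i \<le> j \<and> j < m \<longrightarrow> d i \<le> d j"
    using E2 unfolding elementary_divisor_exponents_def by blast
  have P: "Pinv t m (diag_pow m t e) n k \<longleftrightarrow> Pinv t m (diag_pow m t d) n k" for n k
    using Pinv_transfer[OF U1 W1 diag_pow_carrier(1) iU1 iW1 A1, where n=n and k=k and t=t]
      Pinv_transfer[OF U2 W2 diag_pow_carrier(1) iU2 iW2 A2, where n=n and k=k and t=t] by simp
  have C: "card {j. j < m \<and> n \<le> e j} = card {j. j < m \<and> n \<le> d j}" for n
  proof (rule antisym)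
    show "card {j. j < m \<and> n \<le> e j} \<le> card {j. j < m \<and> n \<le> d j}"
      using Pinv_diag_le[OF t0 tu] Pinv_diag_ge P by blast
    show "card {j. j < m \<and> n \<le> d j} \<le> card {j. j < m \<and> n \<le> e j}"
      using Pinv_diag_le[OF t0 tu] Pinv_diag_ge P by blast
  qed
  have "n \<le> e i \<longleftrightarrow> n \<le> d i" for n
    using mono_card[OF m1 i, of n] mono_card[OF m2 i, of n] C[of n] by simp
  then show ?thesis by (metis le_antisym order_refl)
qed

lemma pn_degree: "degree (\<Prod>k\<in>{..<a}. [:- (c k :: 'a::idom), 1:]) = a"
proof -
  have "degree (\<Prod>k\<in>{..<a}. [:- c k, 1:]) = (\<Sum>k\<in>{..<a}. degree [:- c k, 1:])"
    by (rule degree_prod_eq_sum_degree) auto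
  then show ?thesis by simp
qed

lemma pn_lead: "coeff (\<Prod>k\<in>{..<a}. [:- (c k :: 'a::idom), 1:]) a = 1"
  using lead_coeff_prod[of "\<lambda>k. [:- c k, 1:]" "{..<a}"] pn_degree[where a=a and c=c] by simp

context
  fixes t :: "'a::idom" and v :: "'a \<Rightarrow> nat" and m :: nat and \<xi> :: "nat \<Rightarrow> 'a"
  assumes dvr: "dvr_uniformizer_valuation t v" and mo: "minimally_ordered v m \<xi>"
begin

lemma existence:
  "elementary_divisor_exponents t m (vandermonde m \<xi>) (\<lambda>i. \<Sum>j<i. v (\<xi> i - \<xi> j))"
proof -
  define d where "d i = (\<Sum>j<i. v (\<xi> i - \<xi> j))" for i
  define pn where "pn a = (\<Prod>k\<in>{..<a}. [:- \<xi> k, 1:])" for a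
  define NT where "NT a b = (\<Prod>k\<in>{..<a}. \<xi> b - \<xi> k)" for a b
  define P where "P = mat m m (\<lambda>(a,c). coeff (pn a) c)"
  define V where "V = vandermonde m \<xi>"
  define W where "W = mat m m (\<lambda>(a,b). SOME q. NT a b = t ^ d a * q)"
  define D where "D = diag_pow m t d"
  have Pc: "P \<in> carrier_mat m m" and Vc: "V \<in> carrier_mat m m" and Wc: "W \<in> carrier_mat m m"
    and Dc: "D \<in> carrier_mat m m"
    unfolding P_def V_def W_def D_def vandermonde_def by auto
  have t0: "t \<noteq> 0" using dvr unfolding dvr_uniformizer_valuation_def by simp
  have degpn: "degree (pn a) = a" for a unfolding pn_def by (rule pn_degree)
  have PV: "P * V = mat m m (\<lambda>(a,b). NT a b)"
  proof (rule eq_matI)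
    fix a b assume "a < dim_row (mat m m (\<lambda>(a,b). NT a b))" "b < dim_col (mat m m (\<lambda>(a,b). NT a b))"
    then have a: "a < m" and b: "b < m" by auto
    have "(P * V) $$ (a, b) = (\<Sum>c\<in>{0..<m}. coeff (pn a) c * \<xi> b ^ c)"
      using a b Pc Vc by (simp add: P_def V_def vandermonde_def scalar_prod_def)
    also have "\<dots> = (\<Sum>c\<le>degree (pn a). coeff (pn a) c * \<xi> b ^ c)"
      by (rule sum.mono_neutral_cong_right) (use a degpn in \<open>auto simp: coeff_eq_0\<close>)
    also have "\<dots> = poly (pn a) (\<xi> b)" by (simp add: poly_altdef)
    also have "\<dots> = NT a b" unfolding pn_def NT_def by (simp add: poly_prod)
    finally show "(P * V) $$ (a, b) = mat m m (\<lambda>(a,b). NT a b) $$ (a, b)" using a b by simp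
  qed (use Pc Vc in auto)
  have detP: "det P = 1"
  proof -
    have "det P = prod_list (diag_mat P)"
      by (rule det_lower_triangular[OF _ Pc]) (auto simp: P_def coeff_eq_0 degpn)
    also have "\<dots> = prod (\<lambda>i. P $$ (i, i)) {0..<m}"
      using Pc by (simp add: diag_mat_def prod_list_map_upt)
    also have "\<dots> = 1" by (rule prod.neutral) (auto simp: P_def pn_def pn_lead)
    finally show ?thesis .
  qed
  have iP: "invertible_mat P" by (rule inv_by_det[OF Pc]) (simp add: detP)
  obtain Pi where Pi: "Pi \<in> carrier_mat m m" "P * Pi = 1\<^sub>m m" "Pi * P = 1\<^sub>m m" using inv_obtain[OF iP Pc] by blast
  have detPi: "det Pi dvd 1"
  proof -
    have "det Pi * det P = 1" using det_mult[OF Pi(1) Pc] Pi(3) by simp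
    then show ?thesis by (metis dvd_triv_left)
  qed
  have iPi: "invertible_mat Pi" by (rule inv_by_det[OF Pi(1) detPi])
  have DW: "D * W = mat m m (\<lambda>(a,b). NT a b)"
  proof (rule eq_matI)
    fix a b assume "a < dim_row (mat m m (\<lambda>(a,b). NT a b))" "b < dim_col (mat m m (\<lambda>(a,b). NT a b))"
    then have a: "a < m" and b: "b < m" by auto
    have "(D * W) $$ (a, b) = t ^ d a * W $$ (a, b)" unfolding D_def by (rule diag_mult_entry[OF Wc a b])
    also have "\<dots> = t ^ d a * (SOME q. NT a b = t ^ d a * q)" using a b by (simp add: W_def)
    also have "\<dots> = NT a b"
    proof -
      have "\<exists>q. NT a b = t ^ d a * q" using tpow_dvd[OF dvr mo a b] unfolding NT_def d_def by (elim dvdE) blast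
      from someI_ex[OF this] show ?thesis by simp
    qed
    finally show "(D * W) $$ (a, b) = mat m m (\<lambda>(a,b). NT a b) $$ (a, b)" using a b by simp
  qed (use Dc Wc in auto)
  have detW: "det W dvd 1"
  proof -
    have ut: "upper_triangular W"
      unfolding upper_triangular_def
    proof (intro allI impI)
      fix i j assume i: "i < dim_row W" and ji: "j < i"
      have "NT i j = 0" unfolding NT_def using ji by (intro prod_zero) (auto intro!: bexI[of _ j])
      then have "(SOME q. NT i j = t ^ d i * q) = 0" using t0 by simp
      then show "W $$ (i, j) = 0" using i ji Wc by (simp add: W_def)
    qed
    have "det W = prod_list (diag_mat W)" by (rule det_upper_triangular[OF ut Wc])
    also have "\<dots> = prod (\<lambda>i. W $$ (i, i)) {0..<m}"
      using Wc by (simp add: diag_mat_def prod_list_map_upt)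
    also have "\<dots> dvd 1"
    proof (rule unit_prod)
      show "\<forall>k\<in>{0..<m}. W $$ (k, k) dvd 1"
      proof
        fix k assume "k \<in> {0..<m}"
        then have k: "k < m" by simp
        obtain u where u: "u dvd 1" "NT k k = u * t ^ d k"
          using NT_diag[OF dvr mo k] unfolding NT_def d_def by blast
        have "(SOME q. NT k k = t ^ d k * q) = u" using u t0 by (simp add: mult.commute)
        then have "W $$ (k, k) = u" using k by (simp add: W_def)
        then show "W $$ (k, k) dvd 1" using u by simp
      qed
    qed simp
    finally show ?thesis .
  qed
  have iW: "invertible_mat W" by (rule inv_by_det[OF Wc detW])
  have "V = (Pi * P) * V" using Pi(3) Vc by simp
  also have "\<dots> = Pi * (P * V)" by (rule assoc_mult_mat[OF Pi(1) Pc Vc])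
  also have "\<dots> = Pi * (D * W)" unfolding PV DW ..
  also have "\<dots> = Pi * D * W" by (rule assoc_mult_mat[symmetric, OF Pi(1) Dc Wc])
  finally have VPDW: "V = Pi * D * W" .
  have mono: "\<forall>i j. i \<le> j \<and> j < m \<longrightarrow> d i \<le> d j"
    unfolding d_def using d_mono[OF dvr mo] by blast
  show ?thesis
    unfolding elementary_divisor_exponents_def
    using mono Pi(1) Wc iPi iW VPDW unfolding d_def D_def V_def by blast
qed

end

theorem lemma1p12:
  fixes t :: "'a::idom" and v :: "'a \<Rightarrow> nat" and m :: nat and \<xi> :: "nat \<Rightarrow> 'a"
  assumes "dvr_uniformizer_valuation t v"
    and "m \<ge> 1"
    and "minimally_ordered v m \<xi>"
  shows "(\<forall>i<m. \<forall>j<m. L_mat m \<xi> $$ (i, j) \<in> range to_fract)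
    \<and> elementary_divisor_exponents t m (vandermonde m \<xi>) (\<lambda>i. \<Sum>j<i. v (\<xi> i - \<xi> j))
    \<and> (\<forall>e. elementary_divisor_exponents t m (vandermonde m \<xi>) e \<longrightarrow>
           (\<forall>i<m. e i = (\<Sum>j<i. v (\<xi> i - \<xi> j))))"
proof (intro conjI allI impI)
  fix i j assume "i < m" "j < m"
  then show "L_mat m \<xi> $$ (i, j) \<in> range to_fract" by (rule L_mat_int[OF assms(1,3)])
next
  show E: "elementary_divisor_exponents t m (vandermonde m \<xi>) (\<lambda>i. \<Sum>j<i. v (\<xi> i - \<xi> j))"
    by (rule existence[OF assms(1,3)])
  fix e i assume "elementary_divisor_exponents t m (vandermonde m \<xi>) e" "i < m"
  moreover have "t \<noteq> 0" "\<not> t dvd 1" using assms(1) unfolding dvr_uniformizer_valuation_def by auto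
  ultimately show "e i = (\<Sum>j<i. v (\<xi> i - \<xi> j))"
    using edx_unique[of t m "vandermonde m \<xi>" e "\<lambda>i. \<Sum>j<i. v (\<xi> i - \<xi> j)" i] E by simp
qed

end
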